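(* For every polyhedron $P\subseteq\mathbb R^n$ (nonempty), the Riesz space $\mathcal R(P)$ is strongly semisimple, and $P$ has no outgoing tangent.
   Context: A polyhedron is a finite union of simplexes in $\mathbb R^n$. For $y\in\mathbb R^n$ and a linear subspace $L$, $\mathsf{proj}_L(y)$ is the orthogonal projection. Frenet frame of a sequence $\{x_i\}$ converging to $x$: $u_1$ is its Frenet $1$-frame if $x_i\ne x$ for all $i$ and $u_1=\lim_i (x_i-x)/\|x_i-x\|$; a $k$-tuple $(u_1,\ldots,u_k)$ of pairwise orthogonal unit vectors is its Frenet $k$-frame if $(u_1,\ldots,u_{k-1})$ is its Frenet $(k-1)$-frame and $u_k=\lim_i\frac{x_i-x-\mathsf{proj}_{\mathbb Ru_1+\cdots+\mathbb Ru_{k-1}}(x_i-x)}{\|x_i-x-\mathsf{proj}_{\mathbb Ru_1+\cdots+\mathbb Ru_{k-1}}(x_i-x)\|}$ (nonzero denominators). Tangent: $u=(u_1,\ldots,u_k)$ is a tangent of $X$ at $x$ if $X$ contains a sequence converging to $x$ whose Frenet $k$-frame is $u$; it is outgoing if there are $\lambda_1,\ldots,\lambda_k>0$ with $C\cap X=C'\cap X$, where $C=\operatorname{conv}(x,x+\lambda_1u_1,\ldots,x+\lambda_1u_1+\cdots+\lambda_ku_k)$ and $C'=\operatorname{conv}(x,x+\lambda_1u_1,\ldots,x+\lambda_1u_1+\cdots+\lambda_{k-1}u_{k-1})$. $\mathcal R(X)$: restrictions to $X$ of functions on a closed $n$-cube $K\supseteq X$ that are continuous and affine linear on each simplex of some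 triangulation of $K$; a Riesz space under pointwise operations. Principal ideal generated by $g$: $\{f:|f|\le m|g|\text{ for some }m\in\mathbb N\}$. Strongly semisimple: every principal ideal is an intersection of maximal ideals. *)

theory Defs
  imports "HOL-Analysis.Analysis"
begin

definition simplicial_polyhedron :: "'a::euclidean_space set \<Rightarrow> bool" where
  "simplicial_polyhedron P \<longleftrightarrow>
     (\<exists>\<F>. finite \<F> \<and> (\<forall>S\<in>\<F>. \<exists>k. k simplex S) \<and> P = \<Union>\<F>)"

definition closed_cube :: "'a::euclidean_space set \<Rightarrow> bool" where
  "closed_cube K \<longleftrightarrow> (\<exists>a r. r > 0 \<and> K = cbox a (a + r *\<^sub>R One))"

definition pl_on :: "'a::euclidean_space set \<Rightarrow> ('a \<Rightarrow> real) \<Rightarrow> bool" where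
  "pl_on K f \<longleftrightarrow> continuous_on K f \<and>
     (\<exists>\<T>. triangulation \<T> \<and> \<Union>\<T> = K \<and>
        (\<forall>T\<in>\<T>. \<exists>w c. \<forall>y\<in>T. f y = w \<bullet> y + c))"

text \<open>R(X): restrictions to X (represented as functions vanishing off X).\<close>
definition RX :: "'a::euclidean_space set \<Rightarrow> ('a \<Rightarrow> real) set" where
  "RX X = {g. \<exists>K f. closed_cube K \<and> X \<subseteq> K \<and> pl_on K f \<and>
                   g = (\<lambda>y. if y \<in> X then f y else 0)}"

definition riesz_ideal :: "('a \<Rightarrow> real) set \<Rightarrow> ('a \<Rightarrow> real) set \<Rightarrow> bool" where
  "riesz_ideal R I \<longleftrightarrow> I \<subseteq> R \<and> (\<lambda>y. 0) \<in> I \<and>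
     (\<forall>f\<in>I. \<forall>g\<in>I. (\<lambda>y. f y + g y) \<in> I) \<and>
     (\<forall>c::real. \<forall>f\<in>I. (\<lambda>y. c * f y) \<in> I) \<and>
     (\<forall>f\<in>R. \<forall>g\<in>I. (\<forall>y. \<bar>f y\<bar> \<le> \<bar>g y\<bar>) \<longrightarrow> f \<in> I)"

definition maximal_riesz_ideal :: "('a \<Rightarrow> real) set \<Rightarrow> ('a \<Rightarrow> real) set \<Rightarrow> bool" where
  "maximal_riesz_ideal R I \<longleftrightarrow> riesz_ideal R I \<and> I \<noteq> R \<and>
     (\<forall>J. riesz_ideal R J \<and> I \<subseteq> J \<and> J \<noteq> R \<longrightarrow> J = I)"

definition principal_ideal :: "('a \<Rightarrow> real) set \<Rightarrow> ('a \<Rightarrow> real) \<Rightarrow> ('a \<Rightarrow> real) set" where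
  "principal_ideal R g = {f\<in>R. \<exists>m::nat. \<forall>y. \<bar>f y\<bar> \<le> real m * \<bar>g y\<bar>}"

definition strongly_semisimple :: "('a \<Rightarrow> real) set \<Rightarrow> bool" where
  "strongly_semisimple R \<longleftrightarrow>
     (\<forall>g\<in>R. \<exists>\<M>. (\<forall>I\<in>\<M>. maximal_riesz_ideal R I) \<and> principal_ideal R g = R \<inter> \<Inter>\<M>)"

definition proj_prefix :: "'a::euclidean_space list \<Rightarrow> nat \<Rightarrow> 'a \<Rightarrow> 'a" where
  "proj_prefix us k v = (\<Sum>j<k. (v \<bullet> us ! j) *\<^sub>R us ! j)"

text \<open>us = (u_1,...,u_k), k = length us \<ge> 1, is the Frenet k-frame of xs converging to x.
  (Unfolding of the recursive definition; k-th step uses the projection on the span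
   of the preceding, orthonormal, vectors.)\<close>
definition frenet_frame :: "(nat \<Rightarrow> 'a::euclidean_space) \<Rightarrow> 'a \<Rightarrow> 'a list \<Rightarrow> bool" where
  "frenet_frame xs x us \<longleftrightarrow> us \<noteq> [] \<and> xs \<longlonglongrightarrow> x \<and>
     (\<forall>i<length us. \<forall>j<length us. us ! i \<bullet> us ! j = (if i = j then 1 else 0)) \<and>
     (\<forall>k<length us.
        (\<forall>i. xs i - x - proj_prefix us k (xs i - x) \<noteq> 0) \<and>
        (\<lambda>i. (1 / norm (xs i - x - proj_prefix us k (xs i - x))) *\<^sub>R
               (xs i - x - proj_prefix us k (xs i - x))) \<longlonglongrightarrow> us ! k)"

definition tangent :: "'a::euclidean_space set \<Rightarrow> 'a \<Rightarrow> 'a list \<Rightarrow> bool" where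
  "tangent X x us \<longleftrightarrow> (\<exists>xs. (\<forall>i. xs i \<in> X) \<and> frenet_frame xs x us)"

definition frame_vertex :: "'a::euclidean_space \<Rightarrow> (nat \<Rightarrow> real) \<Rightarrow> 'a list \<Rightarrow> nat \<Rightarrow> 'a" where
  "frame_vertex x l us j = x + (\<Sum>i<j. l i *\<^sub>R us ! i)"

definition outgoing_tangent :: "'a::euclidean_space set \<Rightarrow> 'a \<Rightarrow> 'a list \<Rightarrow> bool" where
  "outgoing_tangent X x us \<longleftrightarrow> tangent X x us \<and>
     (\<exists>l. (\<forall>i<length us. l i > 0) \<and>
        (convex hull (frame_vertex x l us ` {..length us})) \<inter> X =
        (convex hull (frame_vertex x l us ` {..<length us})) \<inter> X)"

end

theory Submission
  imports Defs
begin

lemma simplicial_complex_imp_triangulation: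
  "simplicial_complex \<T> \<Longrightarrow> triangulation \<T>"
  by (auto simp: simplicial_complex_def triangulation_def)

lemma pl_from_cells:
  fixes F :: "'a::euclidean_space \<Rightarrow> real"
  assumes "continuous_on K F" "finite \<M>"
    and poly: "\<And>C. C \<in> \<M> \<Longrightarrow> polytope C"
    and face: "\<And>C1 C2. \<lbrakk>C1 \<in> \<M>; C2 \<in> \<M>\<rbrakk> \<Longrightarrow> C1 \<inter> C2 face_of C1"
    and un: "\<Union>\<M> = K"
    and aff: "\<And>C. C \<in> \<M> \<Longrightarrow> \<exists>w c. \<forall>y\<in>C. F y = w \<bullet> y + c"
  shows "pl_on K F"
proof -
  obtain \<T> where T: "simplicial_complex \<T>" "\<Union>\<T> = \<Union>\<M>"
     "\<And>K. K \<in> \<T> \<Longrightarrow> \<exists>C. C \<in> \<M> \<and> K \<subseteq> C"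
    using simplicial_subdivision_of_cell_complex[OF assms(2) poly face] by metis
  show ?thesis unfolding pl_on_def
  proof (intro conjI exI)
    show "triangulation \<T>" using T(1) by (rule simplicial_complex_imp_triangulation)
    show "\<Union>\<T> = K" using T(2) un by simp
    show "\<forall>T\<in>\<T>. \<exists>w c. \<forall>y\<in>T. F y = w \<bullet> y + c"
    proof
      fix T assume "T \<in> \<T>"
      then obtain C where "C \<in> \<M>" "T \<subseteq> C" using T(3) by blast
      then show "\<exists>w c. \<forall>y\<in>T. F y = w \<bullet> y + c" using aff by blast
    qed
  qed (rule assms(1))
qed

lemma pl_const:
  assumes "closed_cube K"
  shows "pl_on K (\<lambda>y. c)"
proof -
  from assms obtain a r where K: "K = cbox a (a + r *\<^sub>R One)" unfolding closed_cube_def by blast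
  show ?thesis
  proof (rule pl_from_cells[where \<M>="{K}"])
    show "polytope C" if "C \<in> {K}" for C using that K polytope_interval by simp
    show "C1 \<inter> C2 face_of C1" if "C1 \<in> {K}" "C2 \<in> {K}" for C1 C2
      using that K by (simp add: face_of_refl)
    show "\<exists>w c'. \<forall>y\<in>C. c = w \<bullet> y + c'" for C by (rule exI[of _ 0]) auto
  qed auto
qed

lemma pl_scale:
  assumes "pl_on K f"
  shows "pl_on K (\<lambda>y. c * f y)"
proof -
  from assms obtain \<T> where T: "triangulation \<T>" "\<Union>\<T> = K"
    "\<forall>T\<in>\<T>. \<exists>w c. \<forall>y\<in>T. f y = w \<bullet> y + c" and cont: "continuous_on K f"
    unfolding pl_on_def by blast
  show ?thesis unfolding pl_on_def
  proof (intro conjI exI)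
    show "continuous_on K (\<lambda>y. c * f y)" by (intro continuous_intros cont)
    show "\<forall>T\<in>\<T>. \<exists>w d. \<forall>y\<in>T. c * f y = w \<bullet> y + d"
    proof
      fix T assume "T \<in> \<T>"
      then obtain w d where "\<forall>y\<in>T. f y = w \<bullet> y + d" using T(3) by blast
      then show "\<exists>w d. \<forall>y\<in>T. c * f y = w \<bullet> y + d"
        by (intro exI[of _ "c *\<^sub>R w"] exI[of _ "c*d"]) (simp add: algebra_simps)
    qed
  qed (use T in auto)
qed

lemma pl_add:
  assumes "pl_on K f" "pl_on K g"
  shows "pl_on K (\<lambda>y. f y + g y)"
proof -
  from assms(1) obtain \<T>1 where T1: "triangulation \<T>1" "\<Union>\<T>1 = K"
    "\<forall>T\<in>\<T>1. \<exists>w c. \<forall>y\<in>T. f y = w \<bullet> y + c" and cf: "continuous_on K f"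
    unfolding pl_on_def by blast
  from assms(2) obtain \<T>2 where T2: "triangulation \<T>2" "\<Union>\<T>2 = K"
    "\<forall>T\<in>\<T>2. \<exists>w c. \<forall>y\<in>T. g y = w \<bullet> y + c" and cg: "continuous_on K g"
    unfolding pl_on_def by blast
  let ?M = "(\<lambda>(A,B). A \<inter> B) ` (\<T>1 \<times> \<T>2)"
  show ?thesis
  proof (rule pl_from_cells[where \<M>="?M"])
    show "continuous_on K (\<lambda>y. f y + g y)" by (intro continuous_intros cf cg)
    show "finite ?M" using T1(1) T2(1) by (auto simp: triangulation_def)
    show "polytope C" if CM: "C \<in> ?M" for C
    proof -
      obtain A B where AB: "A \<in> \<T>1" "B \<in> \<T>2" "C = A \<inter> B" using CM by auto
      then obtain n m where "n simplex A" "m simplex B" using T1(1) T2(1) unfolding triangulation_def by meson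
      then show ?thesis using AB polytope_Int simplex_imp_polytope by metis
    qed
    show "C1 \<inter> C2 face_of C1" if CC: "C1 \<in> ?M" "C2 \<in> ?M" for C1 C2
    proof -
      obtain A B A' B' where AB: "A \<in> \<T>1" "B \<in> \<T>2" "A' \<in> \<T>1" "B' \<in> \<T>2"
        "C1 = A \<inter> B" "C2 = A' \<inter> B'" using CC by auto
      have "(A \<inter> A') face_of A" "(B \<inter> B') face_of B"
        using AB T1(1) T2(1) by (auto simp: triangulation_def)
      then have "(A \<inter> A') \<inter> (B \<inter> B') face_of A \<inter> B" by (rule face_of_Int_Int)
      moreover have "(A \<inter> A') \<inter> (B \<inter> B') = C1 \<inter> C2" using AB by auto
      ultimately show ?thesis using AB by simp
    qed
    show "\<Union>?M = K"
    proof
      show "\<Union>?M \<subseteq> K" using T1(2) by auto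
      show "K \<subseteq> \<Union>?M"
      proof
        fix y assume "y \<in> K"
        then obtain A B where "A \<in> \<T>1" "B \<in> \<T>2" "y \<in> A" "y \<in> B" using T1(2) T2(2) by blast
        then show "y \<in> \<Union>?M" by blast
      qed
    qed
    show "\<exists>w c. \<forall>y\<in>C. f y + g y = w \<bullet> y + c" if CM: "C \<in> ?M" for C
    proof -
      obtain A B where AB: "A \<in> \<T>1" "B \<in> \<T>2" "C = A \<inter> B" using CM by auto
      obtain w1 c1 where 1: "\<forall>y\<in>A. f y = w1 \<bullet> y + c1" using T1(3) AB by blast
      obtain w2 c2 where 2: "\<forall>y\<in>B. g y = w2 \<bullet> y + c2" using T2(3) AB by blast
      show ?thesis using 1 2 AB
        by (intro exI[of _ "w1 + w2"] exI[of _ "c1 + c2"]) (auto simp: inner_add_left)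
    qed
  qed
qed

lemma polyhedron_affine_preimage:
  fixes L :: "'a::euclidean_space \<Rightarrow> 'b::euclidean_space"
  assumes "linear L" "polyhedron T"
  shows "polyhedron {y. L y + c \<in> T}"
proof -
  from assms(2) obtain F where F: "finite F" "T = \<Inter>F" "\<forall>h\<in>F. \<exists>\<alpha> \<beta>. \<alpha>\<noteq>0 \<and> h = {x. \<alpha>\<bullet>x \<le> \<beta>}"
    unfolding polyhedron_def by blast
  have "{y. L y + c \<in> T} = \<Inter> ((\<lambda>h. {y. L y + c \<in> h}) ` F)" using F(2) by auto
  moreover have "polyhedron {y. L y + c \<in> h}" if hF: "h \<in> F" for h
  proof -
    obtain \<alpha> \<beta> where h: "h = {x. \<alpha>\<bullet>x \<le> \<beta>}" using F(3) hF by blast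
    have eq: "\<alpha> \<bullet> (L y + c) = (adjoint L \<alpha>) \<bullet> y + \<alpha> \<bullet> c" for y
      using adjoint_works[OF assms(1), of y \<alpha>] by (simp add: inner_add_right inner_commute)
    have "{y. L y + c \<in> h} = {y. adjoint L \<alpha> \<bullet> y \<le> \<beta> - \<alpha> \<bullet> c}"
      by (auto simp: h eq)
    then show ?thesis by (simp add: polyhedron_halfspace_le)
  qed
  ultimately show ?thesis using F(1) by (auto intro!: polyhedron_Inter)
qed

lemma inner_Basis_sum:
  fixes j :: "'a::euclidean_space"
  shows "j \<in> Basis \<Longrightarrow> (\<Sum>i\<in>Basis. c i *\<^sub>R i) \<bullet> j = c j"
  by (simp add: inner_sum_left inner_Basis if_distrib sum.delta cong: if_cong)

definition ilo :: "real \<Rightarrow> real \<Rightarrow> real \<Rightarrow> nat \<Rightarrow> real" where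
  "ilo a' a b s = (if s = 0 then a' else if s = 1 then a else b)"
definition ihi :: "real \<Rightarrow> real \<Rightarrow> real \<Rightarrow> nat \<Rightarrow> real" where
  "ihi a b b' s = (if s = 0 then a else if s = 1 then b else b')"

lemma grid_endpoint:
  assumes "a' \<le> a" "a \<le> b" "b \<le> b'" "s \<in> {0,1,2}" "t \<in> {0,1,2}" "s \<noteq> t"
    "ilo a' a b s \<le> z" "z \<le> ihi a b b' s" "ilo a' a b t \<le> z" "z \<le> ihi a b b' t"
  shows "z = ilo a' a b s \<or> z = ihi a b b' s"
  using assms by (auto simp: ilo_def ihi_def)

lemma segment_endpoint_1d:
  fixes p q z u lo hi :: real
  assumes "lo \<le> p" "p \<le> hi" "lo \<le> q" "q \<le> hi" "0 < u" "u < 1" "z = (1-u)*p + u*q"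
    "z = lo \<or> z = hi"
  shows "p = z \<and> q = z"
proof -
  have "(1-u)*(p-lo) \<ge> 0" "u*(q-lo) \<ge> 0" "(1-u)*(hi-p) \<ge> 0" "u*(hi-q) \<ge> 0"
    using assms by auto
  moreover have "(1-u)*(p-lo) + u*(q-lo) = z - lo" "(1-u)*(hi-p) + u*(hi-q) = hi - z"
    using assms(7) by (simp_all add: algebra_simps)
  ultimately have "(z = lo \<longrightarrow> (1-u)*(p-lo) = 0 \<and> u*(q-lo) = 0) \<and>
                   (z = hi \<longrightarrow> (1-u)*(hi-p) = 0 \<and> u*(hi-q) = 0)" by linarith
  then show ?thesis using assms by auto
qed

definition gbox :: "'a::euclidean_space \<Rightarrow> 'a \<Rightarrow> 'a \<Rightarrow> 'a \<Rightarrow> ('a \<Rightarrow> nat) \<Rightarrow> 'a set" where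
  "gbox a' a b b' \<sigma> = {y. \<forall>i\<in>Basis. ilo (a'\<bullet>i) (a\<bullet>i) (b\<bullet>i) (\<sigma> i) \<le> y\<bullet>i \<and> y\<bullet>i \<le> ihi (a\<bullet>i) (b\<bullet>i) (b'\<bullet>i) (\<sigma> i)}"

definition clampv :: "'a::euclidean_space \<Rightarrow> 'a \<Rightarrow> 'a \<Rightarrow> 'a" where
  "clampv a b y = (\<Sum>i\<in>Basis. max (a\<bullet>i) (min (b\<bullet>i) (y\<bullet>i)) *\<^sub>R i)"

definition rlin :: "('a::euclidean_space \<Rightarrow> nat) \<Rightarrow> 'a \<Rightarrow> 'a" where
  "rlin \<sigma> y = (\<Sum>i\<in>Basis. (y\<bullet>i) *\<^sub>R (if \<sigma> i = 1 then i else 0))"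

definition rc :: "'a::euclidean_space \<Rightarrow> 'a \<Rightarrow> ('a \<Rightarrow> nat) \<Rightarrow> 'a" where
  "rc a b \<sigma> = (\<Sum>i\<in>Basis. (if \<sigma> i = 0 then a\<bullet>i else if \<sigma> i = 1 then 0 else b\<bullet>i) *\<^sub>R i)"

lemma linear_rlin: "linear (rlin \<sigma>)"
  unfolding rlin_def linear_iff
  by (auto simp: inner_add_left scaleR_add_left sum.distrib scaleR_sum_right)

lemma rlin_inner: "j \<in> Basis \<Longrightarrow> rlin \<sigma> y \<bullet> j = (if \<sigma> j = 1 then y \<bullet> j else 0)"
proof -
  assume j: "j \<in> Basis"
  have "rlin \<sigma> y = (\<Sum>i\<in>Basis. (if \<sigma> i = 1 then y\<bullet>i else 0) *\<^sub>R i)"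
    unfolding rlin_def by (rule sum.cong) auto
  then show ?thesis using j by (simp add: inner_Basis_sum)
qed

lemma rc_inner: "j \<in> Basis \<Longrightarrow> rc a b \<sigma> \<bullet> j = (if \<sigma> j = 0 then a\<bullet>j else if \<sigma> j = 1 then 0 else b\<bullet>j)"
  unfolding rc_def by (simp add: inner_Basis_sum)

lemma clampv_inner: "j \<in> Basis \<Longrightarrow> clampv a b y \<bullet> j = max (a\<bullet>j) (min (b\<bullet>j) (y\<bullet>j))"
  unfolding clampv_def by (simp add: inner_Basis_sum)

context
  fixes a' a b b' :: "'a::euclidean_space"
  assumes ord: "\<forall>i\<in>Basis. a'\<bullet>i \<le> a\<bullet>i \<and> a\<bullet>i \<le> b\<bullet>i \<and> b\<bullet>i \<le> b'\<bullet>i"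
begin

abbreviation "SIG \<equiv> Basis \<rightarrow>\<^sub>E {0,1,2::nat}"

lemma clamp_gbox:
  assumes "\<sigma> \<in> SIG" "y \<in> gbox a' a b b' \<sigma>"
  shows "clampv a b y = rlin \<sigma> y + rc a b \<sigma>"
proof (rule euclidean_eqI)
  fix j :: 'a assume j: "j \<in> Basis"
  have c: "\<sigma> j = 0 \<or> \<sigma> j = 1 \<or> \<sigma> j = 2" using PiE_mem[OF assms(1) j] by blast
  have "ilo (a'\<bullet>j) (a\<bullet>j) (b\<bullet>j) (\<sigma> j) \<le> y\<bullet>j" "y\<bullet>j \<le> ihi (a\<bullet>j) (b\<bullet>j) (b'\<bullet>j) (\<sigma> j)"
    using assms(2) j by (auto simp: gbox_def)
  moreover have "a\<bullet>j \<le> b\<bullet>j" using ord j by auto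
  ultimately show "clampv a b y \<bullet> j = (rlin \<sigma> y + rc a b \<sigma>) \<bullet> j"
    using j c by (elim disjE) (auto simp: clampv_inner rlin_inner rc_inner inner_add_left ilo_def ihi_def)
qed

lemma clamp_in: "clampv a b y \<in> cbox a b"
  using ord by (auto simp: mem_box clampv_inner)

lemma clamp_id: "y \<in> cbox a b \<Longrightarrow> clampv a b y = y"
  by (rule euclidean_eqI) (auto simp: mem_box clampv_inner)

lemma continuous_clamp: "continuous_on UNIV (clampv a b)"
  unfolding clampv_def by (intro continuous_intros)

lemma gbox_eq: "gbox a' a b b' \<sigma> = cbox (\<Sum>i\<in>Basis. ilo (a'\<bullet>i) (a\<bullet>i) (b\<bullet>i) (\<sigma> i) *\<^sub>R i)
                                       (\<Sum>i\<in>Basis. ihi (a\<bullet>i) (b\<bullet>i) (b'\<bullet>i) (\<sigma> i) *\<^sub>R i)"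
  by (auto simp: gbox_def mem_box inner_Basis_sum)

lemma gbox_sub: "\<sigma> \<in> SIG \<Longrightarrow> gbox a' a b b' \<sigma> \<subseteq> cbox a' b'"
proof
  fix y assume s: "\<sigma> \<in> SIG" and y: "y \<in> gbox a' a b b' \<sigma>"
  show "y \<in> cbox a' b'" unfolding mem_box
  proof
    fix i :: 'a assume i: "i \<in> Basis"
    then have "\<sigma> i = 0 \<or> \<sigma> i = 1 \<or> \<sigma> i = 2" using PiE_mem[OF s] by blast
    then show "a' \<bullet> i \<le> y \<bullet> i \<and> y \<bullet> i \<le> b' \<bullet> i"
      using y i ord by (elim disjE) (auto simp: gbox_def ilo_def ihi_def dest!: bspec[of _ _ i])
  qed
qed

lemma gbox_cover:
  assumes "y \<in> cbox a' b'"
  shows "\<exists>\<sigma>\<in>SIG. y \<in> gbox a' a b b' \<sigma>"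
proof
  let ?s = "restrict (\<lambda>i. if y\<bullet>i < a\<bullet>i then 0 else if y\<bullet>i \<le> b\<bullet>i then 1 else (2::nat)) Basis"
  show "?s \<in> SIG" by auto
  show "y \<in> gbox a' a b b' ?s"
    using assms by (auto simp: gbox_def mem_box ilo_def ihi_def)
qed

definition cell :: "('a \<Rightarrow> nat) \<Rightarrow> 'a set \<Rightarrow> 'a set" where
  "cell \<sigma> T = gbox a' a b b' \<sigma> \<inter> {y. rlin \<sigma> y + rc a b \<sigma> \<in> T}"

lemma cell_polytope: "polytope T \<Longrightarrow> polytope (cell \<sigma> T)"
  unfolding cell_def gbox_eq
  by (intro polytope_Int_polyhedron polytope_interval polyhedron_affine_preimage linear_rlin
      polytope_imp_polyhedron)

lemma cell_mem: "\<sigma> \<in> SIG \<Longrightarrow> y \<in> cell \<sigma> T \<longleftrightarrow> y \<in> gbox a' a b b' \<sigma> \<and> clampv a b y \<in> T"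
  unfolding cell_def using clamp_gbox by auto


lemma pl_extend:
  assumes pl: "pl_on (cbox a b) f"
  shows "pl_on (cbox a' b') (\<lambda>y. f (clampv a b y))"
proof -
  from pl obtain \<T> where T: "triangulation \<T>" "\<Union>\<T> = cbox a b"
    "\<forall>T\<in>\<T>. \<exists>w c. \<forall>y\<in>T. f y = w \<bullet> y + c" and cf: "continuous_on (cbox a b) f"
    unfolding pl_on_def by blast
  have polyT: "polytope T" if "T \<in> \<T>" for T
    using T(1) that unfolding triangulation_def by (meson simplex_imp_polytope)
  let ?M = "(\<lambda>(\<sigma>,T). cell \<sigma> T) ` (SIG \<times> \<T>)"
  show ?thesis
  proof (rule pl_from_cells[where \<M>="?M"])
    show "continuous_on (cbox a' b') (\<lambda>y. f (clampv a b y))"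
      by (rule continuous_on_compose2[OF cf continuous_on_subset[OF continuous_clamp]])
         (auto simp: clamp_in)
    show "finite ?M" using T(1) by (auto simp: triangulation_def finite_PiE)
    show "polytope C" if CM: "C \<in> ?M" for C
      using CM polyT cell_polytope by auto
    show "\<Union>?M = cbox a' b'"
    proof
      show "\<Union>?M \<subseteq> cbox a' b'" using gbox_sub by (auto simp: cell_def)
      show "cbox a' b' \<subseteq> \<Union>?M"
      proof
        fix y assume y: "y \<in> cbox a' b'"
        then obtain \<sigma> where s: "\<sigma> \<in> SIG" "y \<in> gbox a' a b b' \<sigma>" using gbox_cover by blast
        obtain T' where "T' \<in> \<T>" "clampv a b y \<in> T'" using clamp_in T(2) by blast
        then have "y \<in> cell \<sigma> T'" using s cell_mem by blast
        then show "y \<in> \<Union>?M" using s \<open>T' \<in> \<T>\<close> by blast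
      qed
    qed
    show "\<exists>w c. \<forall>y\<in>C. f (clampv a b y) = w \<bullet> y + c" if CM: "C \<in> ?M" for C
    proof -
      obtain \<sigma> T' where s: "\<sigma> \<in> SIG" "T' \<in> \<T>" "C = cell \<sigma> T'" using CM by auto
      obtain w c where wc: "\<forall>y\<in>T'. f y = w \<bullet> y + c" using T(3) s by blast
      have "f (clampv a b y) = adjoint (rlin \<sigma>) w \<bullet> y + (w \<bullet> rc a b \<sigma> + c)" if "y \<in> C" for y
      proof -
        have "clampv a b y \<in> T'" "clampv a b y = rlin \<sigma> y + rc a b \<sigma>"
          using that s cell_mem clamp_gbox by auto
        then show ?thesis using wc adjoint_works[OF linear_rlin, of y \<sigma> w]
          by (simp add: inner_add_right inner_commute)
      qed
      then show ?thesis by blast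
    qed
    show "C1 \<inter> C2 face_of C1" if CC: "C1 \<in> ?M" "C2 \<in> ?M" for C1 C2
    proof -
      obtain \<sigma> T1 where s1: "\<sigma> \<in> SIG" "T1 \<in> \<T>" "C1 = cell \<sigma> T1" using CC by auto
      obtain \<tau> T2 where s2: "\<tau> \<in> SIG" "T2 \<in> \<T>" "C2 = cell \<tau> T2" using CC by auto
      have fT: "(T1 \<inter> T2) face_of T1" using T(1) s1 s2 by (auto simp: triangulation_def)
      have cv: "convex (C1 \<inter> C2)"
        using s1 s2 polyT cell_polytope by (meson convex_Int polytope_imp_convex)
      show ?thesis unfolding face_of_def
      proof (intro conjI ballI impI)
        show "C1 \<inter> C2 \<subseteq> C1" by blast
        show "convex (C1 \<inter> C2)" by (rule cv)
        fix p q z assume pq: "p \<in> C1" "q \<in> C1" and z: "z \<in> C1 \<inter> C2" and seg: "z \<in> open_segment p q"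
        obtain u where u: "0 < u" "u < 1" "z = (1-u) *\<^sub>R p + u *\<^sub>R q"
          using seg by (auto simp: in_segment)
        have pg: "p \<in> gbox a' a b b' \<sigma>" "q \<in> gbox a' a b b' \<sigma>" "z \<in> gbox a' a b b' \<sigma>"
          "z \<in> gbox a' a b b' \<tau>"
          using pq z s1 s2 by (auto simp: cell_def)
        have box: "p \<in> gbox a' a b b' \<tau> \<and> q \<in> gbox a' a b b' \<tau>"
        proof -
          have "ilo (a'\<bullet>i) (a\<bullet>i) (b\<bullet>i) (\<tau> i) \<le> p\<bullet>i \<and> p\<bullet>i \<le> ihi (a\<bullet>i) (b\<bullet>i) (b'\<bullet>i) (\<tau> i) \<and>
                ilo (a'\<bullet>i) (a\<bullet>i) (b\<bullet>i) (\<tau> i) \<le> q\<bullet>i \<and> q\<bullet>i \<le> ihi (a\<bullet>i) (b\<bullet>i) (b'\<bullet>i) (\<tau> i)"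
            if i: "i \<in> Basis" for i
          proof (cases "\<sigma> i = \<tau> i")
            case True then show ?thesis using pg i by (auto simp: gbox_def)
          next
            case False
            have oi: "a'\<bullet>i \<le> a\<bullet>i" "a\<bullet>i \<le> b\<bullet>i" "b\<bullet>i \<le> b'\<bullet>i" using ord i by auto
            have "z\<bullet>i = ilo (a'\<bullet>i) (a\<bullet>i) (b\<bullet>i) (\<sigma> i) \<or> z\<bullet>i = ihi (a\<bullet>i) (b\<bullet>i) (b'\<bullet>i) (\<sigma> i)"
              by (rule grid_endpoint[OF oi _ _ False])
                 (use PiE_mem[OF s1(1) i] PiE_mem[OF s2(1) i] pg i in \<open>auto simp: gbox_def\<close>)
            moreover have "z\<bullet>i = (1-u)*(p\<bullet>i) + u*(q\<bullet>i)" using u by (simp add: inner_add_left)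
            ultimately have "p\<bullet>i = z\<bullet>i \<and> q\<bullet>i = z\<bullet>i"
              using segment_endpoint_1d[of "ilo (a'\<bullet>i) (a\<bullet>i) (b\<bullet>i) (\<sigma> i)" "p\<bullet>i"
                  "ihi (a\<bullet>i) (b\<bullet>i) (b'\<bullet>i) (\<sigma> i)" "q\<bullet>i" u "z\<bullet>i"] pg i u
              by (auto simp: gbox_def)
            then show ?thesis using pg i by (auto simp: gbox_def)
          qed
          then show ?thesis by (auto simp: gbox_def)
        qed
        let ?cp = "clampv a b p" and ?cq = "clampv a b q" and ?cz = "clampv a b z"
        have cT: "?cp \<in> T1" "?cq \<in> T1" "?cz \<in> T1 \<inter> T2"
          using pq z s1 s2 cell_mem by auto
        have "?cz = (1-u) *\<^sub>R ?cp + u *\<^sub>R ?cq"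
        proof -
          have "?cz = rlin \<sigma> z + rc a b \<sigma>" "?cp = rlin \<sigma> p + rc a b \<sigma>" "?cq = rlin \<sigma> q + rc a b \<sigma>"
            using clamp_gbox s1 pg by auto
          moreover have "rlin \<sigma> z = (1-u) *\<^sub>R rlin \<sigma> p + u *\<^sub>R rlin \<sigma> q"
            using u linear_rlin[of \<sigma>] by (simp add: linear_add linear_scale)
          ultimately show ?thesis by (simp add: algebra_simps)
        qed
        have cpq: "?cp \<in> T2 \<and> ?cq \<in> T2"
        proof (cases "?cp = ?cq")
          case True
          then have "?cz = ?cp" using \<open>?cz = _\<close> by (simp add: algebra_simps)
          then show ?thesis using True cT by auto
        next
          case False
          then have "?cz \<in> open_segment ?cp ?cq" using \<open>?cz = _\<close> u by (auto simp: in_segment)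
          then show ?thesis using fT cT unfolding face_of_def by blast
        qed
        show "p \<in> C1 \<inter> C2" "q \<in> C1 \<inter> C2"
          using pq box cpq s2 cell_mem by auto
      qed
    qed
  qed
qed

end

lemma polyhedron_compact:
  assumes "simplicial_polyhedron P" shows "compact P"
proof -
  obtain F where F: "finite F" "\<forall>S\<in>F. \<exists>k. k simplex S" "P = \<Union>F"
    using assms unfolding simplicial_polyhedron_def by blast
  show ?thesis unfolding F(3) by (rule compact_Union[OF F(1)]) (use F(2) compact_simplex in blast)
qed

lemma cube_cbox:
  assumes "closed_cube K"
  obtains a b where "K = cbox a b" "\<forall>i\<in>Basis. a\<bullet>i \<le> b\<bullet>i"
proof -
  from assms obtain a r where "r > 0" "K = cbox a (a + r *\<^sub>R One)" unfolding closed_cube_def by blast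
  then show ?thesis using that[of a "a + r *\<^sub>R One"] by (auto simp: inner_add_left)
qed

lemma bounded_in_cube:
  fixes S :: "'a::euclidean_space set"
  assumes "bounded S"
  obtains K where "closed_cube K" "S \<subseteq> K"
proof -
  from assms obtain B where B: "\<forall>x\<in>S. norm x \<le> B" unfolding bounded_iff by blast
  define R where "R = max B 0 + 1"
  have R: "R > 0" "\<forall>x\<in>S. norm x \<le> R" using B by (auto simp: R_def)
  have cube: "closed_cube (cbox (- R *\<^sub>R One) (R *\<^sub>R (One::'a)))"
    unfolding closed_cube_def
  proof (rule exI[of _ "- R *\<^sub>R One"], rule exI[of _ "2*R"], intro conjI)
    show "0 < 2*R" using R by simp
    have "- R *\<^sub>R One + (2*R) *\<^sub>R One = R *\<^sub>R (One::'a)"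
      using scaleR_add_left[of "-R" "2*R" "One::'a", symmetric] by simp
    then show "cbox (- R *\<^sub>R One) (R *\<^sub>R (One::'a)) = cbox (- R *\<^sub>R One) (- R *\<^sub>R One + (2*R) *\<^sub>R One)"
      by simp
  qed
  have "S \<subseteq> cbox (- R *\<^sub>R One) (R *\<^sub>R One)"
  proof
    fix x assume "x \<in> S"
    then have "\<bar>x \<bullet> i\<bar> \<le> R" if "i \<in> Basis" for i
      using Basis_le_norm[OF that, of x] R by force
    then show "x \<in> cbox (- R *\<^sub>R One) (R *\<^sub>R One)"
      by (auto simp: mem_box abs_le_iff) (smt (verit))
  qed
  then show ?thesis using that cube by blast
qed


lemma pl_extend_cube:
  assumes "closed_cube K1" "closed_cube K" "K1 \<subseteq> K" "pl_on K1 f"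
  obtains F where "pl_on K F" "\<forall>y\<in>K1. F y = f y"
proof -
  obtain a b where ab: "K1 = cbox a b" "\<forall>i\<in>Basis. a\<bullet>i \<le> b\<bullet>i" using cube_cbox[OF assms(1)] by metis
  obtain a' b' where ab': "K = cbox a' b'" "\<forall>i\<in>Basis. a'\<bullet>i \<le> b'\<bullet>i" using cube_cbox[OF assms(2)] by metis
  have ord: "\<forall>i\<in>Basis. a'\<bullet>i \<le> a\<bullet>i \<and> a\<bullet>i \<le> b\<bullet>i \<and> b\<bullet>i \<le> b'\<bullet>i"
    using assms(3) ab ab' subset_box(1)[of a b a' b'] by auto
  have "pl_on K (\<lambda>y. f (clampv a b y))" using pl_extend[OF ord] assms(4) ab ab' by simp
  moreover have "\<forall>y\<in>K1. f (clampv a b y) = f y" using clamp_id[OF ord] ab by simp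
  ultimately show ?thesis using that by blast
qed

lemma RX_add:
  assumes "f \<in> RX P" "g \<in> RX P"
  shows "(\<lambda>y. f y + g y) \<in> RX P"
proof -
  obtain K1 f1 where 1: "closed_cube K1" "P \<subseteq> K1" "pl_on K1 f1" "f = (\<lambda>y. if y \<in> P then f1 y else 0)"
    using assms(1) unfolding RX_def by blast
  obtain K2 g1 where 2: "closed_cube K2" "P \<subseteq> K2" "pl_on K2 g1" "g = (\<lambda>y. if y \<in> P then g1 y else 0)"
    using assms(2) unfolding RX_def by blast
  have "bounded (K1 \<union> K2)" using 1(1) 2(1)
    by (auto simp: closed_cube_def)
  then obtain K where K: "closed_cube K" "K1 \<union> K2 \<subseteq> K" using bounded_in_cube by metis
  obtain F1 where F1: "pl_on K F1" "\<forall>y\<in>K1. F1 y = f1 y" using pl_extend_cube[OF 1(1) K(1) _ 1(3)] K by auto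
  obtain G1 where G1: "pl_on K G1" "\<forall>y\<in>K2. G1 y = g1 y" using pl_extend_cube[OF 2(1) K(1) _ 2(3)] K by auto
  have "(\<lambda>y. f y + g y) = (\<lambda>y. if y \<in> P then F1 y + G1 y else 0)"
  proof
    fix y show "f y + g y = (if y \<in> P then F1 y + G1 y else 0)"
    proof (cases "y \<in> P")
      case True
      then have "y \<in> K1" "y \<in> K2" using 1(2) 2(2) by auto
      then show ?thesis using True 1(4) 2(4) F1(2) G1(2) by simp
    qed (simp add: 1(4) 2(4))
  qed
  moreover have "pl_on K (\<lambda>y. F1 y + G1 y)" using pl_add F1 G1 by blast
  ultimately show ?thesis unfolding RX_def using K 1(2) by blast
qed

lemma RX_scale:
  assumes "f \<in> RX P"
  shows "(\<lambda>y. c * f y) \<in> RX P"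
proof -
  obtain K1 f1 where 1: "closed_cube K1" "P \<subseteq> K1" "pl_on K1 f1" "f = (\<lambda>y. if y \<in> P then f1 y else 0)"
    using assms(1) unfolding RX_def by blast
  have "(\<lambda>y. c * f y) = (\<lambda>y. if y \<in> P then c * f1 y else 0)" using 1 by auto
  then show ?thesis unfolding RX_def using 1 pl_scale by blast
qed

lemma RX_const:
  assumes "bounded P"
  shows "(\<lambda>y. if y \<in> P then c else 0) \<in> RX P"
proof -
  obtain K where K: "closed_cube K" "P \<subseteq> K" using bounded_in_cube[OF assms] by metis
  show ?thesis unfolding RX_def using K pl_const[OF K(1)] by blast
qed

lemma RX_zero:
  assumes "bounded P"
  shows "(\<lambda>y. 0) \<in> RX P"
  using RX_const[OF assms, of 0] by simp

lemma affine_bound_nonneg: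
  fixes f g :: "'a::euclidean_space \<Rightarrow> real"
  assumes "polytope Q" and fa: "\<forall>y\<in>Q. f y = wF \<bullet> y + cF" and ga: "\<forall>y\<in>Q. g y = wG \<bullet> y + cG"
    and gnn: "\<forall>y\<in>Q. g y \<ge> 0" and z: "\<forall>y\<in>Q. g y = 0 \<longrightarrow> f y = 0"
  shows "\<exists>M. M \<ge> 0 \<and> (\<forall>y\<in>Q. \<bar>f y\<bar> \<le> M * g y)"
proof -
  obtain V where V: "finite V" "Q = convex hull V" using assms(1) unfolding polytope_def by blast
  have VQ: "v \<in> Q" if vV: "v \<in> V" for v
  proof -
    have "V \<subseteq> convex hull V" by (rule hull_subset)
    then show ?thesis using V(2) vV by auto
  qed
  define M where "M = (\<Sum>v\<in>V. \<bar>f v\<bar> / g v)"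
  have nn: "\<bar>f v\<bar> / g v \<ge> 0" if "v \<in> V" for v using gnn VQ[OF that] by simp
  have M0: "M \<ge> 0" unfolding M_def by (rule sum_nonneg) (rule nn)
  have Mv: "\<bar>f v\<bar> \<le> M * g v" if v: "v \<in> V" for v
  proof (cases "g v = 0")
    case True then show ?thesis using z VQ[OF v] by simp
  next
    case False
    then have gp: "g v > 0" using gnn VQ[OF v] by force
    have "\<bar>f v\<bar> / g v \<le> M" unfolding M_def
      by (rule member_le_sum[OF v _ V(1)]) (rule nn, simp)
    then show ?thesis using gp by (simp add: divide_le_eq mult.commute)
  qed
  have "\<bar>f y\<bar> \<le> M * g y" if y: "y \<in> Q" for y
  proof -
    have "y \<in> convex hull V" using y V(2) by simp
    then obtain u where u: "\<forall>v\<in>V. 0 \<le> u v" "sum u V = 1" "(\<Sum>v\<in>V. u v *\<^sub>R v) = y"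
      unfolding convex_hull_finite[OF V(1)] by blast
    have aff: "h y = (\<Sum>v\<in>V. u v * h v)" if ha: "\<forall>y\<in>Q. h y = w \<bullet> y + c" for h :: "'a \<Rightarrow> real" and w c
    proof -
      have "h y = w \<bullet> y + c" using ha y by blast
      also have "\<dots> = (\<Sum>v\<in>V. u v * (w \<bullet> v)) + c * (\<Sum>v\<in>V. u v)"
        unfolding u(2) u(3)[symmetric] by (simp add: inner_sum_right)
      also have "\<dots> = (\<Sum>v\<in>V. u v * (w \<bullet> v + c))"
        by (simp add: sum_distrib_left sum.distrib distrib_left mult.commute)
      also have "\<dots> = (\<Sum>v\<in>V. u v * h v)"
        by (rule sum.cong[OF refl]) (use ha VQ in simp)
      finally show ?thesis .
    qed
    have "\<bar>f y\<bar> = \<bar>\<Sum>v\<in>V. u v * f v\<bar>" using aff[OF fa] by simp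
    also have "\<dots> \<le> (\<Sum>v\<in>V. \<bar>u v * f v\<bar>)" by (rule sum_abs)
    also have "\<dots> \<le> (\<Sum>v\<in>V. u v * (M * g v))"
    proof (rule sum_mono)
      fix v assume v: "v \<in> V"
      have "\<bar>u v * f v\<bar> = u v * \<bar>f v\<bar>" using u(1) v by (simp add: abs_mult)
      also have "\<dots> \<le> u v * (M * g v)" using u(1) v Mv[OF v] by (simp add: mult_left_mono)
      finally show "\<bar>u v * f v\<bar> \<le> u v * (M * g v)" .
    qed
    also have "\<dots> = M * (\<Sum>v\<in>V. u v * g v)" by (simp add: sum_distrib_left mult.left_commute)
    also have "\<dots> = M * g y" using aff[OF ga] by simp
    finally show ?thesis .
  qed
  then show ?thesis using M0 by blast
qed

lemma affine_bound:
  fixes f g :: "'a::euclidean_space \<Rightarrow> real"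
  assumes Q: "polytope Q" and fa: "\<forall>y\<in>Q. f y = wF \<bullet> y + cF" and ga: "\<forall>y\<in>Q. g y = wG \<bullet> y + cG"
    and z: "\<forall>y\<in>Q. g y = 0 \<longrightarrow> f y = 0"
  shows "\<exists>M. M \<ge> 0 \<and> (\<forall>y\<in>Q. \<bar>f y\<bar> \<le> M * \<bar>g y\<bar>)"
proof -
  let ?Q1 = "Q \<inter> {y. wG \<bullet> y \<ge> - cG}" and ?Q2 = "Q \<inter> {y. wG \<bullet> y \<le> - cG}"
  have p1: "polytope ?Q1" by (intro polytope_Int_polyhedron Q polyhedron_halfspace_ge)
  have p2: "polytope ?Q2" by (intro polytope_Int_polyhedron Q polyhedron_halfspace_le)
  obtain M1 where M1: "M1 \<ge> 0" "\<forall>y\<in>?Q1. \<bar>f y\<bar> \<le> M1 * g y"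
    using affine_bound_nonneg[OF p1, of f wF cF g wG cG] fa ga z by auto
  obtain M2 where M2: "M2 \<ge> 0" "\<forall>y\<in>?Q2. \<bar>f y\<bar> \<le> M2 * (- g y)"
    using affine_bound_nonneg[OF p2, of f wF cF "\<lambda>y. - g y" "-wG" "-cG"] fa ga z by auto
  have "\<bar>f y\<bar> \<le> (M1 + M2) * \<bar>g y\<bar>" if y: "y \<in> Q" for y
  proof (cases "g y \<ge> 0")
    case True
    then have "y \<in> ?Q1" using y ga by auto
    then have "\<bar>f y\<bar> \<le> M1 * \<bar>g y\<bar>" using M1 True by auto
    also have "\<dots> \<le> (M1 + M2) * \<bar>g y\<bar>" using M2(1) by (simp add: mult_right_mono)
    finally show ?thesis .
  next
    case False
    then have "y \<in> ?Q2" using y ga by auto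
    then have "\<bar>f y\<bar> \<le> M2 * \<bar>g y\<bar>" using M2 False by auto
    also have "\<dots> \<le> (M1 + M2) * \<bar>g y\<bar>" using M1(1) by (simp add: mult_right_mono)
    finally show ?thesis .
  qed
  then show ?thesis using M1(1) M2(1) by (intro exI[of _ "M1+M2"]) auto
qed

lemma RX_bound:
  assumes sp: "simplicial_polyhedron P" and fR: "f \<in> RX P" and gR: "g \<in> RX P"
    and z: "\<forall>y\<in>P. g y = 0 \<longrightarrow> f y = 0"
  shows "\<exists>m::nat. \<forall>y. \<bar>f y\<bar> \<le> real m * \<bar>g y\<bar>"
proof -
  obtain \<F> where F: "finite \<F>" "\<forall>S\<in>\<F>. \<exists>k. k simplex S" "P = \<Union>\<F>"
    using sp unfolding simplicial_polyhedron_def by blast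
  obtain K1 f1 where 1: "closed_cube K1" "P \<subseteq> K1" "pl_on K1 f1" "f = (\<lambda>y. if y \<in> P then f1 y else 0)"
    using fR unfolding RX_def by blast
  obtain K2 g1 where 2: "closed_cube K2" "P \<subseteq> K2" "pl_on K2 g1" "g = (\<lambda>y. if y \<in> P then g1 y else 0)"
    using gR unfolding RX_def by blast
  obtain \<T>1 where T1: "triangulation \<T>1" "\<Union>\<T>1 = K1" "\<forall>T\<in>\<T>1. \<exists>w c. \<forall>y\<in>T. f1 y = w \<bullet> y + c"
    using 1(3) unfolding pl_on_def by blast
  obtain \<T>2 where T2: "triangulation \<T>2" "\<Union>\<T>2 = K2" "\<forall>T\<in>\<T>2. \<exists>w c. \<forall>y\<in>T. g1 y = w \<bullet> y + c"
    using 2(3) unfolding pl_on_def by blast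
  let ?X = "\<F> \<times> \<T>1 \<times> \<T>2"
  have fin: "finite ?X" using F(1) T1(1) T2(1) by (auto simp: triangulation_def)
  have ex: "\<exists>M. M \<ge> 0 \<and> (\<forall>y\<in>S \<inter> A \<inter> B. \<bar>f1 y\<bar> \<le> M * \<bar>g1 y\<bar>)"
    if t: "(S, A, B) \<in> ?X" for S A B
  proof -
    have S: "S \<in> \<F>" and A: "A \<in> \<T>1" and B: "B \<in> \<T>2" using t by auto
    obtain k where "k simplex S" using F(2) S by blast
    moreover obtain n where "n simplex A" using T1(1) A unfolding triangulation_def by blast
    moreover obtain l where "l simplex B" using T2(1) B unfolding triangulation_def by blast
    ultimately have "polytope S" "polytope A" "polytope B" by (simp_all add: simplex_imp_polytope)
    then have poly: "polytope (S \<inter> A \<inter> B)" by (intro polytope_Int)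
    obtain w1 c1 where a1: "\<forall>y\<in>A. f1 y = w1 \<bullet> y + c1" using T1(3) A by blast
    obtain w2 c2 where a2: "\<forall>y\<in>B. g1 y = w2 \<bullet> y + c2" using T2(3) B by blast
    have SP: "S \<subseteq> P" using F(3) S by blast
    have zz: "\<forall>y\<in>S \<inter> A \<inter> B. g1 y = 0 \<longrightarrow> f1 y = 0"
    proof (intro ballI impI)
      fix y assume y: "y \<in> S \<inter> A \<inter> B" and "g1 y = 0"
      then have "y \<in> P" "g y = 0" using SP 2(4) by auto
      then have "f y = 0" using z by blast
      then show "f1 y = 0" using \<open>y \<in> P\<close> 1(4) by simp
    qed
    have a1': "\<forall>y\<in>S \<inter> A \<inter> B. f1 y = w1 \<bullet> y + c1" using a1 by blast
    have a2': "\<forall>y\<in>S \<inter> A \<inter> B. g1 y = w2 \<bullet> y + c2" using a2 by blast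
    show ?thesis by (rule affine_bound[OF poly a1' a2' zz])
  qed
  have "\<forall>t\<in>?X. \<exists>M. M \<ge> 0 \<and> (\<forall>y\<in>fst t \<inter> fst (snd t) \<inter> snd (snd t). \<bar>f1 y\<bar> \<le> M * \<bar>g1 y\<bar>)"
  proof
    fix t assume "t \<in> ?X"
    moreover obtain S A B where "t = (S, A, B)" by (cases t) auto
    ultimately show "\<exists>M. M \<ge> 0 \<and> (\<forall>y\<in>fst t \<inter> fst (snd t) \<inter> snd (snd t). \<bar>f1 y\<bar> \<le> M * \<bar>g1 y\<bar>)"
      using ex by simp
  qed
  from bchoice[OF this] obtain M where M: "\<forall>t\<in>?X. M t \<ge> 0 \<and> (\<forall>y\<in>fst t \<inter> fst (snd t) \<inter> snd (snd t). \<bar>f1 y\<bar> \<le> M t * \<bar>g1 y\<bar>)"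
    by blast
  define Mt where "Mt = (\<Sum>t\<in>?X. M t)"
  define m where "m = nat \<lceil>Mt\<rceil>"
  have Mtm: "Mt \<le> real m" unfolding m_def by linarith
  have "\<bar>f y\<bar> \<le> real m * \<bar>g y\<bar>" for y
  proof (cases "y \<in> P")
    case False then show ?thesis using 1(4) 2(4) by simp
  next
    case True
    then obtain S where S: "S \<in> \<F>" "y \<in> S" using F(3) by blast
    obtain A where A: "A \<in> \<T>1" "y \<in> A" using T1(2) 1(2) True by blast
    obtain B where B: "B \<in> \<T>2" "y \<in> B" using T2(2) 2(2) True by blast
    have t: "(S, A, B) \<in> ?X" using S A B by simp
    have "\<bar>f y\<bar> = \<bar>f1 y\<bar>" using True 1(4) by simp
    also have "\<dots> \<le> M (S, A, B) * \<bar>g1 y\<bar>" using M t S(2) A(2) B(2) by fastforce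
    also have "\<dots> \<le> Mt * \<bar>g1 y\<bar>"
    proof (rule mult_right_mono)
      show "M (S, A, B) \<le> Mt" unfolding Mt_def
        by (rule member_le_sum[OF t _ fin]) (use M in blast)
    qed simp
    also have "\<dots> \<le> real m * \<bar>g1 y\<bar>" using Mtm by (simp add: mult_right_mono)
    also have "\<dots> = real m * \<bar>g y\<bar>" using True 2(4) by simp
    finally show ?thesis .
  qed
  then show ?thesis by blast
qed

definition Ix :: "('a \<Rightarrow> real) set \<Rightarrow> 'a \<Rightarrow> ('a \<Rightarrow> real) set" where
  "Ix R x = {f\<in>R. f x = 0}"

lemma Ix_maximal:
  fixes P :: "'a::euclidean_space set"
  assumes "bounded P" "x \<in> P"
  shows "maximal_riesz_ideal (RX P) (Ix (RX P) x)"
proof -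
  let ?R = "RX P"
  have ideal: "riesz_ideal ?R (Ix ?R x)"
    unfolding riesz_ideal_def Ix_def
  proof (intro conjI ballI allI impI)
    show "{f \<in> ?R. f x = 0} \<subseteq> ?R" by blast
    show "(\<lambda>y. 0) \<in> {f \<in> ?R. f x = 0}" using RX_zero[OF assms(1)] by simp
    show "(\<lambda>y. f y + g y) \<in> {f \<in> ?R. f x = 0}" if "f \<in> {f \<in> ?R. f x = 0}" "g \<in> {f \<in> ?R. f x = 0}" for f g
      using that RX_add by auto
    show "(\<lambda>y. c * f y) \<in> {f \<in> ?R. f x = 0}" if "f \<in> {f \<in> ?R. f x = 0}" for c f
      using that RX_scale by auto
    show "f \<in> {f \<in> ?R. f x = 0}" if "f \<in> ?R" "g \<in> {f \<in> ?R. f x = 0}" "\<forall>y. \<bar>f y\<bar> \<le> \<bar>g y\<bar>" for f g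
      using that by (auto dest: spec[of _ x])
  qed
  have one: "(\<lambda>y. if y \<in> P then 1 else 0) \<in> ?R" by (rule RX_const[OF assms(1)])
  have ne: "Ix ?R x \<noteq> ?R"
  proof
    assume "Ix ?R x = ?R"
    then have "(\<lambda>y. if y \<in> P then 1 else 0) \<in> Ix ?R x" using one by simp
    then show False using assms(2) by (simp add: Ix_def)
  qed
  have max: "J = Ix ?R x" if J: "riesz_ideal ?R J" "Ix ?R x \<subseteq> J" "J \<noteq> ?R" for J
  proof (rule ccontr)
    assume "J \<noteq> Ix ?R x"
    then obtain f where f: "f \<in> J" "f x \<noteq> 0" using J(1,2) unfolding riesz_ideal_def Ix_def by blast
    have fR: "f \<in> ?R" using J(1) f(1) unfolding riesz_ideal_def by blast
    have "h \<in> J" if hR: "h \<in> ?R" for h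
    proof -
      let ?c = "h x / f x"
      let ?h' = "\<lambda>y. h y + (- ?c) * f y"
      have "?h' \<in> ?R" by (rule RX_add[OF hR RX_scale[OF fR]])
      moreover have "?h' x = 0" using f(2) by simp
      ultimately have "?h' \<in> J" using J(2) by (auto simp: Ix_def)
      moreover have "(\<lambda>y. ?c * f y) \<in> J" using J(1) f(1) unfolding riesz_ideal_def by blast
      ultimately have "(\<lambda>y. ?h' y + ?c * f y) \<in> J" using J(1) unfolding riesz_ideal_def by blast
      moreover have "(\<lambda>y. ?h' y + ?c * f y) = h" by (rule ext) simp
      ultimately show ?thesis by simp
    qed
    then have "J = ?R" using J(1) unfolding riesz_ideal_def by blast
    then show False using J(3) by simp
  qed
  show ?thesis unfolding maximal_riesz_ideal_def using ideal ne max by blast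
qed

lemma strongly_semisimple_RX:
  fixes P :: "'a::euclidean_space set"
  assumes sp: "simplicial_polyhedron P"
  shows "strongly_semisimple (RX P)"
  unfolding strongly_semisimple_def
proof
  fix g assume gR: "g \<in> RX P"
  have bP: "bounded P" using polyhedron_compact[OF sp] compact_imp_bounded by blast
  let ?M = "{Ix (RX P) x | x. x \<in> P \<and> g x = 0}"
  have "\<forall>I\<in>?M. maximal_riesz_ideal (RX P) I"
  proof
    fix I assume "I \<in> ?M"
    then obtain x where "x \<in> P" "I = Ix (RX P) x" by blast
    then show "maximal_riesz_ideal (RX P) I" using Ix_maximal[OF bP] by simp
  qed
  moreover have "principal_ideal (RX P) g = RX P \<inter> \<Inter>?M"
  proof
    show "principal_ideal (RX P) g \<subseteq> RX P \<inter> \<Inter>?M"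
    proof
      fix f assume f: "f \<in> principal_ideal (RX P) g"
      then obtain m :: nat where fR: "f \<in> RX P" and m: "\<forall>y. \<bar>f y\<bar> \<le> real m * \<bar>g y\<bar>"
        unfolding principal_ideal_def by blast
      have "f \<in> Ix (RX P) x" if "x \<in> P" "g x = 0" for x
        using m[rule_format, of x] that fR by (simp add: Ix_def)
      then have "f \<in> I" if "I \<in> ?M" for I using that by auto
      then show "f \<in> RX P \<inter> \<Inter>?M" using fR by (simp add: Inter_iff)
    qed
    show "RX P \<inter> \<Inter>?M \<subseteq> principal_ideal (RX P) g"
    proof
      fix f assume f: "f \<in> RX P \<inter> \<Inter>?M"
      have "\<forall>y\<in>P. g y = 0 \<longrightarrow> f y = 0"
      proof (intro ballI impI)
        fix y assume "y \<in> P" "g y = 0"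
        then have "Ix (RX P) y \<in> ?M" by auto
        then have "f \<in> Ix (RX P) y" using f by (simp add: Inter_iff)
        then show "f y = 0" by (simp add: Ix_def)
      qed
      moreover have fR: "f \<in> RX P" using f by simp
      ultimately obtain m :: nat where "\<forall>y. \<bar>f y\<bar> \<le> real m * \<bar>g y\<bar>"
        using RX_bound[OF sp fR gR] by blast
      then show "f \<in> principal_ideal (RX P) g" using fR unfolding principal_ideal_def by blast
    qed
  qed
  ultimately show "\<exists>\<M>. (\<forall>I\<in>\<M>. maximal_riesz_ideal (RX P) I) \<and> principal_ideal (RX P) g = RX P \<inter> \<Inter>\<M>"
    by (intro exI[of _ ?M] conjI)
qed

lemma poly_lex_eventually:
  fixes p :: "nat \<Rightarrow> real"
  assumes "\<forall>m<n. (\<forall>j<m. p j = 0) \<longrightarrow> p m \<le> 0"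
  shows "eventually (\<lambda>e. (\<Sum>m<n. e^(m+1) * p m) \<le> 0) (at_right 0)"
  using assms
proof (induction n arbitrary: p)
  case 0
  then show ?case by simp
next
  case (Suc n)
  have eq: "(\<Sum>m<Suc n. e^(m+1) * p m) = e * (p 0 + (\<Sum>m<n. e^(m+1) * p (Suc m)))" for e :: real
    unfolding sum.lessThan_Suc_shift by (simp add: sum_distrib_left algebra_simps del: sum.lessThan_Suc)
  have p0: "p 0 \<le> 0" using Suc.prems by auto
  have pos: "eventually (\<lambda>e::real. e > 0) (at_right 0)" by (simp add: eventually_at_right_less)
  show ?case
  proof (cases "p 0 = 0")
    case True
    have "\<forall>m<n. (\<forall>j<m. p (Suc j) = 0) \<longrightarrow> p (Suc m) \<le> 0"
    proof (intro allI impI)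
      fix m assume m: "m < n" and z: "\<forall>j<m. p (Suc j) = 0"
      have "\<forall>j<Suc m. p j = 0"
      proof (intro allI impI)
        fix j assume "j < Suc m"
        then show "p j = 0" using True z by (cases j) auto
      qed
      then show "p (Suc m) \<le> 0" using Suc.prems m by auto
    qed
    then have ev: "eventually (\<lambda>e. (\<Sum>m<n. e^(m+1) * p (Suc m)) \<le> 0) (at_right 0)"
      using Suc.IH[of "\<lambda>m. p (Suc m)"] by simp
    show ?thesis
      using eventually_conj[OF ev pos]
    proof eventually_elim
      case (elim e) show ?case by (subst eq, rule mult_nonneg_nonpos) (use elim True in auto)
    qed
  next
    case False
    then have neg: "p 0 < 0" using p0 by simp
    have "((\<lambda>e::real. (\<Sum>m<n. e^(m+1) * p (Suc m))) \<longlongrightarrow> (\<Sum>m<n. 0^(m+1) * p (Suc m))) (at_right 0)"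
      by (intro tendsto_intros)
    then have "((\<lambda>e::real. (\<Sum>m<n. e^(m+1) * p (Suc m))) \<longlongrightarrow> 0) (at_right 0)" by simp
    then have ev: "eventually (\<lambda>e. (\<Sum>m<n. e^(m+1) * p (Suc m)) < - p 0) (at_right 0)"
      using neg by (intro order_tendstoD(2)) auto
    show ?thesis
      using eventually_conj[OF ev pos]
    proof eventually_elim
      case (elim e) show ?case by (subst eq, rule mult_nonneg_nonpos) (use elim in auto)
    qed
  qed
qed

lemma freq_ev_False:
  assumes "frequently P F" "eventually Q F" "\<And>x. P x \<Longrightarrow> Q x \<Longrightarrow> False"
  shows False
proof -
  have "eventually (\<lambda>x. \<not> P x) F" using assms(2) by (rule eventually_mono) (use assms(3) in blast)
  then show False using assms(1) unfolding frequently_def by simp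
qed

lemma psum_zero_prefix:
  fixes q l :: "nat \<Rightarrow> real"
  assumes "\<forall>i<j. q i = 0"
  shows "(\<Sum>i<Suc j. l i * q i) = l j * q j"
proof -
  have "(\<Sum>i<j. l i * q i) = 0" using assms by (intro sum.neutral) auto
  then show ?thesis by simp
qed

lemma psum_lex:
  fixes q l :: "nat \<Rightarrow> real"
  assumes lex: "\<forall>m<k. (\<forall>j<m. q j = 0) \<longrightarrow> q m \<le> 0" and lp: "\<forall>i<k. l i > 0"
  shows "\<forall>m<k. (\<forall>j<m. (\<Sum>i<Suc j. l i * q i) = 0) \<longrightarrow> (\<Sum>i<Suc m. l i * q i) \<le> 0"
proof (intro allI impI)
  fix m assume m: "m < k" and z: "\<forall>j<m. (\<Sum>i<Suc j. l i * q i) = 0"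
  have qz: "q j = 0" if "j < m" for j
    using that
  proof (induction j rule: less_induct)
    case (less j)
    then have "\<forall>i<j. q i = 0" by auto
    then have "(\<Sum>i<Suc j. l i * q i) = l j * q j" by (rule psum_zero_prefix)
    moreover have "(\<Sum>i<Suc j. l i * q i) = 0" using z less.prems by blast
    moreover have "l j > 0" using lp less.prems m by auto
    ultimately show ?case by simp
  qed
  then have "\<forall>i<m. q i = 0" by blast
  then have "(\<Sum>i<Suc m. l i * q i) = l m * q m" by (rule psum_zero_prefix)
  moreover have "q m \<le> 0" using lex m qz by blast
  moreover have "l m > 0" using lp m by blast
  ultimately show "(\<Sum>i<Suc m. l i * q i) \<le> 0" by (simp add: mult_nonneg_nonpos)
qed

lemma no_outgoing:
  fixes P :: "'a::euclidean_space set"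
  assumes sp: "simplicial_polyhedron P"
  shows "\<not> outgoing_tangent P x us"
proof
  assume "outgoing_tangent P x us"
  then obtain xs l where xsP: "\<forall>i. xs i \<in> P" and fr: "frenet_frame xs x us"
    and lpos: "\<forall>i<length us. l i > 0"
    and eqC: "convex hull (frame_vertex x l us ` {..length us}) \<inter> P =
              convex hull (frame_vertex x l us ` {..<length us}) \<inter> P"
    unfolding outgoing_tangent_def tangent_def by blast
  define k where "k = length us"
  define u where "u = (\<lambda>i. us ! i)"
  have k0: "k > 0" using fr unfolding frenet_frame_def k_def by simp
  have lim: "xs \<longlonglongrightarrow> x" using fr unfolding frenet_frame_def by simp
  have orth: "\<And>i j. i < k \<Longrightarrow> j < k \<Longrightarrow> u i \<bullet> u j = (if i = j then 1 else 0)"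
    using fr unfolding frenet_frame_def k_def u_def by simp
  have res: "\<And>j. j < k \<Longrightarrow> (\<lambda>i. (1 / norm (xs i - x - proj_prefix us j (xs i - x))) *\<^sub>R
               (xs i - x - proj_prefix us j (xs i - x))) \<longlonglongrightarrow> u j"
    using fr unfolding frenet_frame_def k_def u_def by blast
  have resnz: "\<And>j i. j < k \<Longrightarrow> xs i - x - proj_prefix us j (xs i - x) \<noteq> 0"
    using fr unfolding frenet_frame_def k_def by blast
  obtain \<F> where F: "finite \<F>" "\<forall>S\<in>\<F>. \<exists>k. k simplex S" "P = \<Union>\<F>"
    using sp unfolding simplicial_polyhedron_def by blast
  have "\<exists>S\<in>\<F>. frequently (\<lambda>i. xs i \<in> S) sequentially"
  proof (rule ccontr)
    assume "\<not> ?thesis"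
    then have "\<forall>S\<in>\<F>. eventually (\<lambda>i. xs i \<notin> S) sequentially" unfolding frequently_def by blast
    then have "eventually (\<lambda>i. \<forall>S\<in>\<F>. xs i \<notin> S) sequentially" by (rule eventually_ball_finite[OF F(1)])
    then obtain i where "\<forall>S\<in>\<F>. xs i \<notin> S" using eventually_sequentially by auto
    then show False using xsP F(3) by auto
  qed
  then obtain S where S: "S \<in> \<F>" and freq: "frequently (\<lambda>i. xs i \<in> S) sequentially" by blast
  have SP: "S \<subseteq> P" using S F(3) by blast
  obtain n where sim: "n simplex S" using F(2) S by blast
  have xS: "x \<in> S"
  proof (rule ccontr)
    assume "x \<notin> S"
    then have "eventually (\<lambda>i. xs i \<in> - S) sequentially"
      using topological_tendstoD[OF lim, of "- S"] closed_simplex[OF sim] by (simp add: open_Compl)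
    then show False by (rule freq_ev_False[OF freq]) simp
  qed
  obtain H where H: "finite H" "S = \<Inter>H" "\<forall>h\<in>H. \<exists>\<alpha> \<beta>. \<alpha> \<noteq> 0 \<and> h = {y. \<alpha> \<bullet> y \<le> \<beta>}"
    using simplex_imp_polyhedron[OF sim] unfolding polyhedron_def by blast
  have lex: "\<forall>j<k. (\<forall>m<j. \<alpha> \<bullet> u m = 0) \<longrightarrow> \<alpha> \<bullet> u j \<le> 0"
    if fq: "frequently (\<lambda>i. \<alpha> \<bullet> (xs i - x) \<le> 0) sequentially" for \<alpha>
  proof (intro allI impI)
    fix j assume j: "j < k" and z: "\<forall>m<j. \<alpha> \<bullet> u m = 0"
    show "\<alpha> \<bullet> u j \<le> 0"
    proof (rule ccontr)
      assume "\<not> \<alpha> \<bullet> u j \<le> 0"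
      then have pos: "\<alpha> \<bullet> u j > 0" by simp
      define e where "e = (\<lambda>i. xs i - x - proj_prefix us j (xs i - x))"
      have pe: "\<alpha> \<bullet> e i = \<alpha> \<bullet> (xs i - x)" for i
      proof -
        have "\<alpha> \<bullet> proj_prefix us j (xs i - x) = (\<Sum>m<j. ((xs i - x) \<bullet> u m) * (\<alpha> \<bullet> u m))"
          unfolding proj_prefix_def u_def by (simp add: inner_sum_right)
        also have "\<dots> = 0" using z by (intro sum.neutral) auto
        finally show ?thesis unfolding e_def by (simp add: inner_diff_right)
      qed
      have "(\<lambda>i. \<alpha> \<bullet> ((1 / norm (e i)) *\<^sub>R e i)) \<longlonglongrightarrow> \<alpha> \<bullet> u j"
        using res[OF j] unfolding e_def by (intro tendsto_intros)
      then have "eventually (\<lambda>i. \<alpha> \<bullet> ((1 / norm (e i)) *\<^sub>R e i) > 0) sequentially"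
        using pos by (rule order_tendstoD(1))
      then show False
      proof (rule freq_ev_False[OF fq])
        fix i assume a: "\<alpha> \<bullet> (xs i - x) \<le> 0" and b: "\<alpha> \<bullet> ((1 / norm (e i)) *\<^sub>R e i) > 0"
        have "e i \<noteq> 0" using resnz[OF j] unfolding e_def by blast
        then have "norm (e i) > 0" by simp
        then have "\<alpha> \<bullet> e i > 0" using b by (simp add: zero_less_divide_iff)
        then show False using a pe by simp
      qed
    qed
  qed
  define V where "V = frame_vertex x l us"
  define y where "y = (\<lambda>e::real. x + (\<Sum>m<k. (e^(m+1)) *\<^sub>R (V (Suc m) - x)))"
  have Vx: "V m - x = (\<Sum>i<m. l i *\<^sub>R u i)" for m unfolding V_def frame_vertex_def u_def by simp
  have inner_y: "\<alpha> \<bullet> y e = \<alpha> \<bullet> x + (\<Sum>m<k. e^(m+1) * (\<Sum>i<Suc m. l i * (\<alpha> \<bullet> u i)))" for \<alpha> e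
    unfolding y_def Vx by (simp add: inner_add_right inner_sum_right)
  have ylim: "(y \<longlongrightarrow> x) (at_right 0)"
  proof -
    have "(y \<longlongrightarrow> x + (\<Sum>m<k. (0^(m+1)) *\<^sub>R (V (Suc m) - x))) (at_right 0)"
      unfolding y_def by (intro tendsto_intros)
    then show ?thesis by simp
  qed
  have evh: "eventually (\<lambda>e. y e \<in> h) (at_right 0)" if h: "h \<in> H" for h
  proof -
    obtain \<alpha> \<beta> where hab: "h = {y. \<alpha> \<bullet> y \<le> \<beta>}" using H(3) h by blast
    have "x \<in> h" using xS H(2) h by blast
    then have xb: "\<alpha> \<bullet> x \<le> \<beta>" using hab by simp
    show ?thesis
    proof (cases "\<alpha> \<bullet> x < \<beta>")
      case True
      have "((\<lambda>e. \<alpha> \<bullet> y e) \<longlongrightarrow> \<alpha> \<bullet> x) (at_right 0)" by (intro tendsto_intros ylim)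
      then have "eventually (\<lambda>e. \<alpha> \<bullet> y e < \<beta>) (at_right 0)" using True by (rule order_tendstoD(2))
      then show ?thesis by (rule eventually_mono) (simp add: hab)
    next
      case False
      then have xe: "\<alpha> \<bullet> x = \<beta>" using xb by simp
      have "frequently (\<lambda>i. \<alpha> \<bullet> (xs i - x) \<le> 0) sequentially"
      proof (rule frequently_elim1[OF freq])
        fix i assume "xs i \<in> S"
        then have "xs i \<in> h" using H(2) h by blast
        then show "\<alpha> \<bullet> (xs i - x) \<le> 0" using hab xe by (simp add: inner_diff_right)
      qed
      then have lx: "\<forall>j<k. (\<forall>m<j. \<alpha> \<bullet> u m = 0) \<longrightarrow> \<alpha> \<bullet> u j \<le> 0" by (rule lex)
      have "\<forall>m<k. (\<forall>j<m. (\<Sum>i<Suc j. l i * (\<alpha> \<bullet> u i)) = 0) \<longrightarrow> (\<Sum>i<Suc m. l i * (\<alpha> \<bullet> u i)) \<le> 0"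
        by (rule psum_lex[OF lx]) (use lpos k_def in simp)
      then have "eventually (\<lambda>e. (\<Sum>m<k. e^(m+1) * (\<Sum>i<Suc m. l i * (\<alpha> \<bullet> u i))) \<le> 0) (at_right 0)"
        by (rule poly_lex_eventually)
      then show ?thesis by (rule eventually_mono) (simp add: hab inner_y xe)
    qed
  qed
  have ev1: "eventually (\<lambda>e. \<forall>h\<in>H. y e \<in> h) (at_right 0)"
    using evh by (intro eventually_ball_finite[OF H(1)]) blast
  have "((\<lambda>e::real. \<Sum>m<k. e^(m+1)) \<longlongrightarrow> (\<Sum>m<k. (0::real)^(m+1))) (at_right 0)"
    by (intro tendsto_intros)
  then have "((\<lambda>e::real. \<Sum>m<k. e^(m+1)) \<longlongrightarrow> 0) (at_right 0)" by simp
  then have ev2: "eventually (\<lambda>e::real. (\<Sum>m<k. e^(m+1)) < 1) (at_right 0)"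
    by (rule order_tendstoD(2)) simp
  have ev3: "eventually (\<lambda>e::real. e > 0) (at_right 0)" by (simp add: eventually_at_right_less)
  obtain e where e: "\<forall>h\<in>H. y e \<in> h" "(\<Sum>m<k. e^(m+1)) < 1" "e > 0"
    using eventually_happens'[OF _ eventually_conj[OF ev1 eventually_conj[OF ev2 ev3]]] by auto
  have yS: "y e \<in> P" using e(1) H(2) SP by blast
  define s where "s = (\<Sum>m<k. e^(m+1))"
  define \<mu> where "\<mu> = (\<lambda>m. if m = 0 then 1 - s else e^m)"
  have yC: "y e \<in> convex hull (V ` {..k})"
  proof -
    have sumeq: "(\<Sum>m\<in>{..k}. \<mu> m) = 1"
      unfolding lessThan_Suc_atMost[symmetric] sum.lessThan_Suc_shift by (simp add: \<mu>_def s_def)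
    have V0: "V 0 = x" unfolding V_def frame_vertex_def by simp
    have "(\<Sum>m\<in>{..k}. \<mu> m *\<^sub>R V m) = (1 - s) *\<^sub>R x + (\<Sum>m<k. e^(m+1) *\<^sub>R V (Suc m))"
      unfolding lessThan_Suc_atMost[symmetric] sum.lessThan_Suc_shift by (simp add: \<mu>_def V0)
    also have "\<dots> = y e"
      unfolding y_def s_def by (simp add: scaleR_diff_right sum_subtractf scaleR_sum_left algebra_simps)
    finally have yeq: "(\<Sum>m\<in>{..k}. \<mu> m *\<^sub>R V m) = y e" .
    have "(\<Sum>m\<in>{..k}. \<mu> m *\<^sub>R V m) \<in> convex hull (V ` {..k})"
    proof (rule convex_sum)
      show "0 \<le> \<mu> i" for i using e(2) e(3) unfolding \<mu>_def s_def by auto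
      show "V i \<in> convex hull (V ` {..k})" if "i \<in> {..k}" for i
        using that by (simp add: hull_inc)
    qed (use sumeq in auto)
    then show ?thesis using yeq by simp
  qed
  define w where "w = u (k - 1)"
  have kk: "k - 1 < k" using k0 by simp
  have C'sub: "convex hull (V ` {..<k}) \<subseteq> {z. w \<bullet> z = w \<bullet> x}"
  proof (rule hull_minimal)
    show "convex {z. w \<bullet> z = w \<bullet> x}" by (rule convex_hyperplane)
    show "V ` {..<k} \<subseteq> {z. w \<bullet> z = w \<bullet> x}"
    proof
      fix z assume "z \<in> V ` {..<k}"
      then obtain m where m: "m < k" "z = V m" by auto
      have "w \<bullet> (V m - x) = (\<Sum>i<m. l i * (w \<bullet> u i))" unfolding Vx by (simp add: inner_sum_right)
      also have "\<dots> = 0"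
      proof (rule sum.neutral, rule ballI)
        fix i assume "i \<in> {..<m}"
        then have "i < k" "i \<noteq> k - 1" using m by auto
        then show "l i * (w \<bullet> u i) = 0" unfolding w_def using orth[OF kk] by simp
      qed
      finally show "z \<in> {z. w \<bullet> z = w \<bullet> x}" using m by (simp add: inner_diff_right)
    qed
  qed
  have ynot: "w \<bullet> y e \<noteq> w \<bullet> x"
  proof -
    obtain k' where k': "k = Suc k'" using k0 by (cases k) auto
    have q: "w \<bullet> u i = (if i = k' then 1 else 0)" if "i < k" for i
      unfolding w_def using orth[OF kk that] k' by (auto simp: inner_commute)
    have p: "(\<Sum>i<Suc m. l i * (w \<bullet> u i)) = (if m = k' then l k' else 0)" if "m < k" for m
    proof -
      have "\<forall>i<m. w \<bullet> u i = 0" using q that k' by auto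
      then have "(\<Sum>i<Suc m. l i * (w \<bullet> u i)) = l m * (w \<bullet> u m)" by (rule psum_zero_prefix)
      then show ?thesis using q[OF that] by auto
    qed
    have "(\<Sum>m<k. e^(m+1) * (\<Sum>i<Suc m. l i * (w \<bullet> u i))) = (\<Sum>m<k. e^(m+1) * (if m = k' then l k' else 0))"
      using p by (intro sum.cong) auto
    also have "\<dots> = e^(k'+1) * l k'" using k' by (simp add: sum.If_cases)
    finally have "w \<bullet> y e = w \<bullet> x + e^(k'+1) * l k'" using inner_y by simp
    moreover have "e^(k'+1) * l k' > 0" using e(3) lpos k' k_def by simp
    ultimately show ?thesis by linarith
  qed
  have "y e \<in> convex hull (V ` {..<k}) \<inter> P" using eqC yC yS unfolding V_def k_def by blast
  then show False using C'sub ynot by blast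
qed

theorem proposition6p2:
  fixes P :: "'a::euclidean_space set"
  assumes "simplicial_polyhedron P" and "P \<noteq> {}"
  shows "strongly_semisimple (RX P) \<and> \<not> (\<exists>x us. outgoing_tangent P x us)"
  using strongly_semisimple_RX[OF assms(1)] no_outgoing[OF assms(1)] by blast

end
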